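(* Let $X,Y$ be separable Banach spaces, $S:X\to X$ and $T:Y\to Y$ bounded invertible linear operators, and $\Pi:X\to Y$ a bounded linear surjection with $\Pi\circ S=T\circ\Pi$. Suppose $\Pi$ admits a strong bounded selector. If $T$ is Li-Yorke chaotic, then $S$ is Li-Yorke chaotic.
   Context: $\Pi$ admits a strong bounded selector if there is $L\ge1$ such that for every $y\in Y$ there exists $x\in\Pi^{-1}(y)$ with $\|S^n x\|\le L\|T^n y\|$ and $\|T^n y\|\le L\|S^nx\|$ for all $n\in\mathbb Z$. An operator $T$ is Li-Yorke chaotic if there exists a vector $y$ with $\liminf_{n\to\infty}\|T^ny\|=0$ and $\limsup_{n\to\infty}\|T^ny\|=\infty$. *)

theory Defs
  imports "HOL-Analysis.Analysis" "HOL-Library.Liminf_Limsup"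
begin

definition separable_space :: "'a::metric_space itself \<Rightarrow> bool" where
  "separable_space _ \<longleftrightarrow> (\<exists>D::'a set. countable D \<and> closure D = UNIV)"

definition bounded_invertible :: "('a::real_normed_vector \<Rightarrow> 'a) \<Rightarrow> bool" where
  "bounded_invertible S \<longleftrightarrow> bounded_linear S \<and> bij S \<and> bounded_linear (inv S)"

definition ipow :: "('a \<Rightarrow> 'a) \<Rightarrow> int \<Rightarrow> ('a \<Rightarrow> 'a)" where
  "ipow S n = (if n \<ge> 0 then S ^^ nat n else (inv S) ^^ nat (- n))"

definition strong_bounded_selector ::
  "('a::real_normed_vector \<Rightarrow> 'b::real_normed_vector) \<Rightarrow> ('a \<Rightarrow> 'a) \<Rightarrow> ('b \<Rightarrow> 'b) \<Rightarrow> bool" where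
  "strong_bounded_selector P S T \<longleftrightarrow>
     (\<exists>L::real. L \<ge> 1 \<and> (\<forall>y. \<exists>x. P x = y \<and>
        (\<forall>n::int. norm (ipow S n x) \<le> L * norm (ipow T n y)
                 \<and> norm (ipow T n y) \<le> L * norm (ipow S n x))))"

definition li_yorke_chaotic :: "('a::real_normed_vector \<Rightarrow> 'a) \<Rightarrow> bool" where
  "li_yorke_chaotic T \<longleftrightarrow>
     (\<exists>y. liminf (\<lambda>n. ereal (norm ((T ^^ n) y))) = 0 \<and>
          limsup (\<lambda>n. ereal (norm ((T ^^ n) y))) = \<infinity>)"

end

theory Submission
  imports Defs
begin

theorem lemma3p3:
  fixes S :: "'a::banach \<Rightarrow> 'a" and T :: "'b::banach \<Rightarrow> 'b" and P :: "'a \<Rightarrow> 'b"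
  assumes "separable_space TYPE('a)" and "separable_space TYPE('b)"
    and "bounded_invertible S" and "bounded_invertible T"
    and "bounded_linear P" and "surj P"
    and "P \<circ> S = T \<circ> P"
    and "strong_bounded_selector P S T"
    and "li_yorke_chaotic T"
  shows "li_yorke_chaotic S"
proof -
  obtain y where y1: "liminf (\<lambda>n. ereal (norm ((T ^^ n) y))) = 0"
    and y2: "limsup (\<lambda>n. ereal (norm ((T ^^ n) y))) = \<infinity>"
    using assms(9) unfolding li_yorke_chaotic_def by blast
  obtain L :: real where L: "L \<ge> 1" and H: "\<forall>y. \<exists>x. P x = y \<and>
        (\<forall>n::int. norm (ipow S n x) \<le> L * norm (ipow T n y)
                 \<and> norm (ipow T n y) \<le> L * norm (ipow S n x))"
    using assms(8) unfolding strong_bounded_selector_def by blast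
  obtain x where hx: "\<forall>n::int. norm (ipow S n x) \<le> L * norm (ipow T n y)
                 \<and> norm (ipow T n y) \<le> L * norm (ipow S n x)"
    using H by blast
  have h1: "norm ((S ^^ n) x) \<le> L * norm ((T ^^ n) y)" 
   and h2: "norm ((T ^^ n) y) \<le> L * norm ((S ^^ n) x)" for n :: nat
    using hx[rule_format, of "int n"] by (auto simp: ipow_def)
  let ?a = "\<lambda>n. ereal (norm ((S ^^ n) x))"
  let ?b = "\<lambda>n. ereal (norm ((T ^^ n) y))"
  have "liminf ?a \<le> liminf (\<lambda>n. ereal L * ?b n)"
    by (rule Liminf_mono) (use h1 in auto)
  also have "\<dots> = ereal L * liminf ?b"
    by (rule Liminf_ereal_mult_left) (use L in auto)
  also have "\<dots> = 0" using y1 by simp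
  finally have a1: "liminf ?a \<le> 0" .
  have a2: "0 \<le> liminf ?a" by (rule Liminf_bounded) auto
  have "\<infinity> = limsup ?b" using y2 by simp
  also have "\<dots> \<le> limsup (\<lambda>n. ereal L * ?a n)"
    by (rule Limsup_mono) (use h2 in auto)
  also have "\<dots> = ereal L * limsup ?a"
    by (rule Limsup_ereal_mult_left) (use L in auto)
  finally have "ereal L * limsup ?a = \<infinity>" by (simp add: top_unique)
  hence "limsup ?a = \<infinity>" using L
    by (cases "limsup ?a") (auto split: if_splits)
  thus ?thesis unfolding li_yorke_chaotic_def using a1 a2 by (intro exI[of _ x]) auto
qed

end
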